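(* Let $\mathcal{D}$ be a $\{K_3,K_4\}$-decomposition of $K_{18}$ with $\alpha=13$, let $W$ be the set of vertices $x$ with $\alpha_x\ge 2$, and for $i\in\{0,1,2,3\}$ let $t_i$ be the number of copies of $K_3$ in $\mathcal{D}$ having exactly $i$ vertices in $W$. Then $(t_0,t_1,t_2,t_3)\neq(0,3,5,5)$.
   Context: A $\{K_3,K_4\}$-decomposition of $K_v$ is a collection of subgraphs, each isomorphic to $K_3$ or $K_4$, such that every edge of $K_v$ lies in exactly one of them. $\alpha$ is the number of copies of $K_3$ in the decomposition, and for a vertex $x$, $\alpha_x$ is the number of copies of $K_3$ in the decomposition containing $x$. *)

theory Defs
  imports Main
begin

definition K34_decomposition :: "'a set \<Rightarrow> 'a set set \<Rightarrow> bool" where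
  "K34_decomposition V D \<longleftrightarrow>
     (\<forall>B\<in>D. B \<subseteq> V \<and> (card B = 3 \<or> card B = 4)) \<and>
     (\<forall>x\<in>V. \<forall>y\<in>V. x \<noteq> y \<longrightarrow> (\<exists>!B. B \<in> D \<and> x \<in> B \<and> y \<in> B))"

definition triangles :: "'a set set \<Rightarrow> 'a set set" where
  "triangles D = {B \<in> D. card B = 3}"

definition alpha :: "'a set set \<Rightarrow> nat" where
  "alpha D = card (triangles D)"

definition alpha_at :: "'a set set \<Rightarrow> 'a \<Rightarrow> nat" where
  "alpha_at D x = card {B \<in> triangles D. x \<in> B}"

end

theory Submission
  imports Defs
begin

lemma dec_finD:
  assumes "K34_decomposition V D" "finite V"
  shows "finite D"
proof -
  have "D \<subseteq> Pow V" using assms(1) by (auto simp: K34_decomposition_def)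
  then show ?thesis using assms(2) by (meson finite_Pow_iff finite_subset)
qed

lemma star_count:
  assumes dec: "K34_decomposition V D" and x: "x \<in> V" and S: "S \<subseteq> V" and fin: "finite V"
  shows "card (S - {x}) = (\<Sum>B\<in>{B\<in>D. x\<in>B}. card (B \<inter> S - {x}))"
proof -
  have fD: "finite D" using dec fin by (rule dec_finD)
  have sub: "\<And>B. B \<in> D \<Longrightarrow> B \<subseteq> V" using dec by (auto simp: K34_decomposition_def)
  have uq: "\<And>y. y \<in> V \<Longrightarrow> y \<noteq> x \<Longrightarrow> \<exists>!C. C \<in> D \<and> x \<in> C \<and> y \<in> C"
  proof -
    fix y assume y: "y \<in> V" "y \<noteq> x"
    have all: "\<forall>x\<in>V. \<forall>y\<in>V. x \<noteq> y \<longrightarrow> (\<exists>!B. B \<in> D \<and> x \<in> B \<and> y \<in> B)"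
      using dec unfolding K34_decomposition_def by (rule conjunct2)
    show "\<exists>!C. C \<in> D \<and> x \<in> C \<and> y \<in> C"
      by (rule mp[OF bspec[OF bspec[OF all x] y(1)]]) (use y(2) in auto)
  qed
  have eq: "S - {x} = (\<Union>B\<in>{B\<in>D. x\<in>B}. B \<inter> S - {x})"
  proof
    show "S - {x} \<subseteq> (\<Union>B\<in>{B\<in>D. x\<in>B}. B \<inter> S - {x})"
    proof
      fix y assume y: "y \<in> S - {x}"
      then have "y \<in> V" "y \<noteq> x" using S by auto
      then obtain B where "B \<in> D" "x \<in> B" "y \<in> B"
        using uq by blast
      then show "y \<in> (\<Union>B\<in>{B\<in>D. x\<in>B}. B \<inter> S - {x})" using y by auto
    qed
  qed auto
  have "card (\<Union>B\<in>{B\<in>D. x\<in>B}. B \<inter> S - {x}) = (\<Sum>B\<in>{B\<in>D. x\<in>B}. card (B \<inter> S - {x}))"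
  proof (rule card_UN_disjoint)
    show "finite {B\<in>D. x\<in>B}" using fD by simp
    show "\<forall>B\<in>{B\<in>D. x\<in>B}. finite (B \<inter> S - {x})" using sub fin by (auto intro: finite_subset)
    show "\<forall>B\<in>{B\<in>D. x\<in>B}. \<forall>B'\<in>{B\<in>D. x\<in>B}. B \<noteq> B' \<longrightarrow> (B \<inter> S - {x}) \<inter> (B' \<inter> S - {x}) = {}"
    proof (intro ballI impI)
      fix B B' assume B: "B \<in> {B\<in>D. x\<in>B}" and B': "B' \<in> {B\<in>D. x\<in>B}" and ne: "B \<noteq> B'"
      show "(B \<inter> S - {x}) \<inter> (B' \<inter> S - {x}) = {}"
      proof (rule ccontr)
        assume "(B \<inter> S - {x}) \<inter> (B' \<inter> S - {x}) \<noteq> {}"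
        then obtain y where y: "y \<in> B" "y \<in> B'" "y \<in> S" "y \<noteq> x" by auto
        then have "y \<in> V" using S by auto
        then have "\<exists>!C. C \<in> D \<and> x \<in> C \<and> y \<in> C" using uq y(4) by simp
        then obtain C where C: "\<And>C'. C' \<in> D \<and> x \<in> C' \<and> y \<in> C' \<Longrightarrow> C' = C" by (elim ex1E) blast
        have "B = C" using B y by (intro C) auto
        moreover have "B' = C" using B' y by (intro C) auto
        ultimately show False using ne by simp
      qed
    qed
  qed
  then show ?thesis using eq by simp
qed

lemma double_count:
  assumes "finite S" "finite D"
  shows "(\<Sum>x\<in>S. \<Sum>B\<in>{B\<in>D. x\<in>B}. g x B) = (\<Sum>B\<in>D. \<Sum>x\<in>S \<inter> B. g x B)"
proof -
  have "(\<Sum>x\<in>S. \<Sum>B\<in>{B\<in>D. x\<in>B}. g x B) = (\<Sum>x\<in>S. \<Sum>B\<in>D. if x \<in> B then g x B else 0)"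
    using assms by (simp add: sum.inter_filter)
  also have "\<dots> = (\<Sum>B\<in>D. \<Sum>x\<in>S. if x \<in> B then g x B else 0)" by (rule sum.swap)
  also have "\<dots> = (\<Sum>B\<in>D. \<Sum>x\<in>{x\<in>S. x \<in> B}. g x B)"
    using assms by (simp add: sum.inter_filter)
  also have "\<dots> = (\<Sum>B\<in>D. \<Sum>x\<in>S \<inter> B. g x B)"
    by (intro sum.cong) auto
  finally show ?thesis .
qed

lemma split_D:
  assumes "K34_decomposition V D" "finite D"
  shows "(\<Sum>B\<in>D. f B) = (\<Sum>B\<in>triangles D. f B) + (\<Sum>B\<in>{B\<in>D. card B = 4}. f B)"
proof -
  have "D = triangles D \<union> {B\<in>D. card B = 4}" using assms(1)
    by (auto simp: K34_decomposition_def triangles_def)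
  moreover have "triangles D \<inter> {B\<in>D. card B = 4} = {}" by (auto simp: triangles_def)
  ultimately show ?thesis using assms(2)
    by (metis (no_types, lifting) finite_Un sum.union_disjoint)
qed

theorem mainTheorem13:
  fixes V :: "'a set" and D :: "'a set set"
  assumes "finite V" and "card V = 18"
    and "K34_decomposition V D"
    and "alpha D = 13"
  defines "W \<equiv> {x \<in> V. alpha_at D x \<ge> 2}"
  defines "t \<equiv> (\<lambda>i::nat. card {B \<in> triangles D. card (B \<inter> W) = i})"
  shows "(t 0, t 1, t 2, t 3) \<noteq> (0, 3, 5, 5)"
proof
  assume tt: "(t 0, t 1, t 2, t 3) = (0, 3, 5, 5)"
  note fin = assms(1) and dec = assms(3)
  have fD: "finite D" using dec fin by (rule dec_finD)
  define T where "T = triangles D"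
  define Q where "Q = {B\<in>D. card B = 4}"
  define be where "be x = card {B\<in>Q. x \<in> B}" for x
  have fT: "finite T" "finite Q" using fD by (auto simp: T_def Q_def triangles_def)
  have sub: "\<And>B. B \<in> D \<Longrightarrow> B \<subseteq> V" using dec by (auto simp: K34_decomposition_def)
  have cT: "\<And>B. B \<in> T \<Longrightarrow> card B = 3" by (auto simp: T_def triangles_def)
  have cQ: "\<And>B. B \<in> Q \<Longrightarrow> card B = 4" by (auto simp: Q_def)
  have TD: "T \<subseteq> D" "Q \<subseteq> D" by (auto simp: T_def Q_def triangles_def)
  have finB: "\<And>B. B \<in> D \<Longrightarrow> finite B" using sub fin by (auto intro: finite_subset)
  have WV: "W \<subseteq> V" by (auto simp: W_def)
  have fW: "finite W" using WV fin by (rule finite_subset)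
  have alT: "\<And>x. alpha_at D x = card {B\<in>T. x \<in> B}" by (simp add: alpha_at_def T_def)
  have gen: "\<And>x f. x \<in> V \<Longrightarrow> (\<Sum>B\<in>{B\<in>D. x\<in>B}. f B) = (\<Sum>B\<in>{B\<in>T. x\<in>B}. f B) + (\<Sum>B\<in>{B\<in>Q. x\<in>B}. f B)"
  proof -
    fix x f
    have "{B\<in>D. x\<in>B} = {B\<in>T. x\<in>B} \<union> {B\<in>Q. x\<in>B}" using dec
      by (auto simp: K34_decomposition_def T_def Q_def triangles_def)
    moreover have "{B\<in>T. x\<in>B} \<inter> {B\<in>Q. x\<in>B} = {}" using cT cQ by fastforce
    moreover have "finite {B\<in>T. x\<in>B}" "finite {B\<in>Q. x\<in>B}" using fT by auto
    ultimately show "(\<Sum>B\<in>{B\<in>D. x\<in>B}. f B) = (\<Sum>B\<in>{B\<in>T. x\<in>B}. f B) + (\<Sum>B\<in>{B\<in>Q. x\<in>B}. f B)"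
      by (simp add: sum.union_disjoint)
  qed
  have deg: "\<And>x. x \<in> V \<Longrightarrow> 2 * alpha_at D x + 3 * be x = 17"
  proof -
    fix x assume x: "x \<in> V"
    have "card (V - {x}) = 17" using assms(2) x fin by simp
    also have "card (V - {x}) = (\<Sum>B\<in>{B\<in>D. x\<in>B}. card (B \<inter> V - {x}))"
      using star_count[OF dec x _ fin] by simp
    also have "\<dots> = (\<Sum>B\<in>{B\<in>T. x\<in>B}. card (B \<inter> V - {x})) + (\<Sum>B\<in>{B\<in>Q. x\<in>B}. card (B \<inter> V - {x}))"
      using gen x by blast
    also have "(\<Sum>B\<in>{B\<in>T. x\<in>B}. card (B \<inter> V - {x})) = (\<Sum>B\<in>{B\<in>T. x\<in>B}. 2)"
    proof (rule sum.cong)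
      fix B assume "B \<in> {B\<in>T. x\<in>B}"
      then have "B \<inter> V = B" "card B = 3" "x \<in> B" "finite B" using sub TD cT finB by auto
      then show "card (B \<inter> V - {x}) = 2" by simp
    qed simp
    also have "(\<Sum>B\<in>{B\<in>Q. x\<in>B}. card (B \<inter> V - {x})) = (\<Sum>B\<in>{B\<in>Q. x\<in>B}. 3)"
    proof (rule sum.cong)
      fix B assume "B \<in> {B\<in>Q. x\<in>B}"
      then have "B \<inter> V = B" "card B = 4" "x \<in> B" "finite B" using sub TD cQ finB by auto
      then show "card (B \<inter> V - {x}) = 3" by simp
    qed simp
    finally show "2 * alpha_at D x + 3 * be x = 17" by (simp add: alT be_def mult.commute)
  qed
  have al147: "\<And>x. x \<in> V \<Longrightarrow> alpha_at D x = 1 \<or> alpha_at D x = 4 \<or> alpha_at D x = 7"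
  proof -
    fix x assume "x \<in> V"
    from deg[OF this] show "alpha_at D x = 1 \<or> alpha_at D x = 4 \<or> alpha_at D x = 7" by presburger
  qed
  have sumA: "\<And>S. S \<subseteq> V \<Longrightarrow> (\<Sum>x\<in>S. alpha_at D x) = (\<Sum>B\<in>T. card (S \<inter> B))"
  proof -
    fix S assume S: "S \<subseteq> V"
    have fS: "finite S" using S fin by (rule finite_subset)
    have "(\<Sum>x\<in>S. alpha_at D x) = (\<Sum>x\<in>S. \<Sum>B\<in>{B\<in>T. x\<in>B}. 1)" by (simp add: alT)
    also have "\<dots> = (\<Sum>B\<in>T. \<Sum>x\<in>S \<inter> B. 1)" by (rule double_count[OF fS fT(1)])
    finally show "(\<Sum>x\<in>S. alpha_at D x) = (\<Sum>B\<in>T. card (S \<inter> B))" by simp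
  qed
  have sumB: "\<And>S. S \<subseteq> V \<Longrightarrow> (\<Sum>x\<in>S. be x) = (\<Sum>B\<in>Q. card (S \<inter> B))"
  proof -
    fix S assume S: "S \<subseteq> V"
    have fS: "finite S" using S fin by (rule finite_subset)
    have "(\<Sum>x\<in>S. be x) = (\<Sum>x\<in>S. \<Sum>B\<in>{B\<in>Q. x\<in>B}. 1)" by (simp add: be_def)
    also have "\<dots> = (\<Sum>B\<in>Q. \<Sum>x\<in>S \<inter> B. 1)" by (rule double_count[OF fS fT(2)])
    finally show "(\<Sum>x\<in>S. be x) = (\<Sum>B\<in>Q. card (S \<inter> B))" by simp
  qed
  have cardT: "card T = 13" using assms(4) by (simp add: alpha_def T_def)
  have sAV: "(\<Sum>x\<in>V. alpha_at D x) = 39"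
  proof -
    have "(\<Sum>x\<in>V. alpha_at D x) = (\<Sum>B\<in>T. card (V \<inter> B))" using sumA by simp
    also have "\<dots> = (\<Sum>B\<in>T. 3)"
      by (intro sum.cong) (use sub TD cT in \<open>auto simp: Int_absorb1\<close>)
    finally show ?thesis using cardT by simp
  qed
  have grp: "\<And>h. (\<Sum>B\<in>T. h (card (B \<inter> W))) = (\<Sum>i\<in>{..3::nat}. t i * h i)"
  proof -
    fix h :: "nat \<Rightarrow> nat"
    have img: "(\<lambda>B. card (B \<inter> W)) ` T \<subseteq> {..3}"
    proof
      fix k assume "k \<in> (\<lambda>B. card (B \<inter> W)) ` T"
      then obtain B where B: "B \<in> T" "k = card (B \<inter> W)" by auto
      then have "card (B \<inter> W) \<le> card B" using finB TD by (meson card_mono inf_le1 subsetD)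
      then show "k \<in> {..3}" using B cT by auto
    qed
    have "(\<Sum>B\<in>T. h (card (B \<inter> W))) = (\<Sum>i\<in>{..3}. \<Sum>B\<in>{B\<in>T. card (B \<inter> W) = i}. h (card (B \<inter> W)))"
      by (rule sum.group[symmetric, OF fT(1) _ img]) simp
    also have "\<dots> = (\<Sum>i\<in>{..3::nat}. t i * h i)"
    proof (rule sum.cong)
      fix i :: nat
      have "(\<Sum>B\<in>{B\<in>T. card (B \<inter> W) = i}. h (card (B \<inter> W))) = (\<Sum>B\<in>{B\<in>T. card (B \<inter> W) = i}. h i)"
        by (rule sum.cong) auto
      then show "(\<Sum>B\<in>{B\<in>T. card (B \<inter> W) = i}. h (card (B \<inter> W))) = t i * h i"
        by (simp add: t_def T_def)
    qed simp
    finally show "(\<Sum>B\<in>T. h (card (B \<inter> W))) = (\<Sum>i\<in>{..3::nat}. t i * h i)" .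
  qed
  have t0: "t 0 = 0" "t (Suc 0) = 3" "t (Suc (Suc 0)) = 5" "t (Suc (Suc (Suc 0))) = 5"
    using tt by (auto simp: numeral_3_eq_3 numeral_2_eq_2)
  have sAW: "(\<Sum>x\<in>W. alpha_at D x) = 28"
  proof -
    have "(\<Sum>x\<in>W. alpha_at D x) = (\<Sum>B\<in>T. card (W \<inter> B))" using sumA WV by simp
    also have "\<dots> = (\<Sum>B\<in>T. (\<lambda>k. k) (card (B \<inter> W)))" by (simp add: Int_commute)
    also have "\<dots> = 28" unfolding grp[of "\<lambda>k. k"] by (simp add: numeral_3_eq_3 t0)
    finally show ?thesis .
  qed
  have sPT: "(\<Sum>B\<in>T. card (B \<inter> W) * (card (B \<inter> W) - 1)) = 40"
    unfolding grp[of "\<lambda>k. k * (k - 1)"] by (simp add: numeral_3_eq_3 t0)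
  have sVW: "(\<Sum>x\<in>V - W. alpha_at D x) = 11"
    using sum.subset_diff[OF WV fin, of "alpha_at D"] sAV sAW by simp
  have "(\<Sum>x\<in>V - W. alpha_at D x) = (\<Sum>x\<in>V - W. 1)"
  proof (rule sum.cong)
    fix x assume "x \<in> V - W"
    then show "alpha_at D x = 1" using al147[of x] by (auto simp: W_def)
  qed simp
  then have "card (V - W) = 11" using sVW by simp
  then have cW: "card W = 7" using card_Diff_subset[OF fW WV] assms(2) card_mono[OF fin WV] by simp
  have "(\<Sum>x\<in>W. 2 * alpha_at D x + 3 * be x) = (\<Sum>x\<in>W. 17)"
    by (rule sum.cong) (use deg WV in auto)
  then have "2 * (\<Sum>x\<in>W. alpha_at D x) + 3 * (\<Sum>x\<in>W. be x) = 119"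
    using cW by (simp add: sum.distrib sum_distrib_left)
  then have sBW: "(\<Sum>x\<in>W. be x) = 21" using sAW by simp
  have "(\<Sum>x\<in>V. 2 * alpha_at D x + 3 * be x) = (\<Sum>x\<in>V. 17)"
    by (rule sum.cong) (use deg in auto)
  then have "2 * (\<Sum>x\<in>V. alpha_at D x) + 3 * (\<Sum>x\<in>V. be x) = 306"
    using assms(2) by (simp add: sum.distrib sum_distrib_left)
  then have sBV: "(\<Sum>x\<in>V. be x) = 76" using sAV by simp
  have "(\<Sum>x\<in>V. be x) = (\<Sum>B\<in>Q. 4)"
    unfolding sumB[OF order_refl]
    by (intro sum.cong) (use sub TD cQ in \<open>auto simp: Int_absorb1\<close>)
  then have cardQ: "card Q = 19" using sBV by simp
  have QW: "(\<Sum>B\<in>Q. card (B \<inter> W)) = 21" using sumB[OF WV] sBW by (simp add: Int_commute)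
  have "(\<Sum>x\<in>W. card (W - {x})) = (\<Sum>x\<in>W. \<Sum>B\<in>{B\<in>D. x\<in>B}. card (B \<inter> W - {x}))"
  proof (rule sum.cong[OF refl])
    fix x assume "x \<in> W"
    then have "x \<in> V" using WV by blast
    then show "card (W - {x}) = (\<Sum>B\<in>{B\<in>D. x\<in>B}. card (B \<inter> W - {x}))"
      by (rule star_count[OF dec _ WV fin])
  qed
  also have "\<dots> = (\<Sum>B\<in>D. \<Sum>x\<in>W \<inter> B. card (B \<inter> W - {x}))" by (rule double_count[OF fW fD])
  also have "\<dots> = (\<Sum>B\<in>D. card (B \<inter> W) * (card (B \<inter> W) - 1))"
  proof (rule sum.cong)
    fix B assume B: "B \<in> D"
    have "(\<Sum>x\<in>W \<inter> B. card (B \<inter> W - {x})) = (\<Sum>x\<in>W \<inter> B. card (B \<inter> W) - 1)"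
      by (rule sum.cong) (auto simp: Int_commute)
    then show "(\<Sum>x\<in>W \<inter> B. card (B \<inter> W - {x})) = card (B \<inter> W) * (card (B \<inter> W) - 1)"
      by (simp add: Int_commute)
  qed simp
  also have "\<dots> = (\<Sum>B\<in>T. card (B \<inter> W) * (card (B \<inter> W) - 1)) + (\<Sum>B\<in>Q. card (B \<inter> W) * (card (B \<inter> W) - 1))"
    using split_D[OF dec fD] by (simp add: T_def Q_def)
  finally have "(\<Sum>x\<in>W. card (W - {x})) = 40 + (\<Sum>B\<in>Q. card (B \<inter> W) * (card (B \<inter> W) - 1))"
    using sPT by simp
  moreover have "(\<Sum>x\<in>W. card (W - {x})) = 42"
  proof -
    have "(\<Sum>x\<in>W. card (W - {x})) = (\<Sum>x\<in>W. 6)"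
      by (rule sum.cong) (use cW fW in auto)
    then show ?thesis using cW by simp
  qed
  ultimately have QP: "(\<Sum>B\<in>Q. card (B \<inter> W) * (card (B \<inter> W) - 1)) = 2" by simp
  have "(\<Sum>B\<in>Q. 2 * card (B \<inter> W)) \<le> (\<Sum>B\<in>Q. 2 + card (B \<inter> W) * (card (B \<inter> W) - 1))"
  proof (rule sum_mono)
    fix B
    show "2 * card (B \<inter> W) \<le> 2 + card (B \<inter> W) * (card (B \<inter> W) - 1)"
    proof (cases "card (B \<inter> W)")
      case 0 then show ?thesis by simp
    next
      case (Suc m) then show ?thesis by (cases m) auto
    qed
  qed
  moreover have "(\<Sum>B\<in>Q. 2 * card (B \<inter> W)) = 42"
    using QW by (simp add: sum_distrib_left[symmetric])
  moreover have "(\<Sum>B\<in>Q. 2 + card (B \<inter> W) * (card (B \<inter> W) - 1)) = 40"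
    using QP cardQ by (simp only: sum.distrib) simp
  ultimately show False by simp
qed

end
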